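(* Let $\bar x \in \mathrm{dom}\,\psi$, let $A>0$, and let $T = T_A(\bar x)$. Then for all $y \in \mathrm{dom}\,\psi$, $$M_A(\bar x, y) \;\geq\; M_A(\bar x) + \tfrac12 \langle \nabla^2 f(\bar x)(y - T), y - T\rangle + \tfrac12 \sigma A \|y - T\|^2 .$$ Moreover, $$\|T_A(\bar x) - \bar x\| \;\leq\; \frac{1}{\sigma A}\, \|F'(\bar x)\|_*,$$ where $F'(\bar x) = \nabla f(\bar x) + \psi'(\bar x)$ and $\psi'(\bar x)$ is an arbitrary element of $\partial\psi(\bar x)$.
   Context: $\mathbb{E}$ is a finite-dimensional real vector space with an arbitrary norm $\|\cdot\|$; $\mathbb{E}^*$ is its dual space with dual norm $\|g\|_* = \max\{\langle g, x\rangle : \|x\|\le 1\}$. We consider $F(x) = f(x) + \psi(x)$, where $\psi$ is a closed convex function with $\mathrm{dom}\,\psi \subseteq \mathbb{E}$ and $f$ is a convex, twice continuously differentiable function. The scaling function $d$ is differentiable and satisfies, for some $\sigma \in (0,1]$ and all $x, y \in \mathrm{dom}\,\psi$: $d(y) \ge d(x) + \langle \nabla d(x), y - x\rangle + \frac{\sigma}{2}\|y-x\|^2$ and $\|\nabla d(x) - \nabla d(y)\|_* \le \|x - y\|$. The Bregman distance is $\rho(x,y) = d(y) - d(x) - \langle \nabla d(x), y - x\rangle$. For $\bar x \in \mathrm{dom}\,\psi$ and $A > 0$ define $$M_A(\bar x, y) = f(\bar x) + \langle \nabla f(\bar x), y - \bar x\rangle + \tfrac12\langle \nabla^2 f(\bar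 x)(y-\bar x), y - \bar x\rangle + A\rho(\bar x, y) + \psi(y),$$ $T_A(\bar x) = \arg\min_{y \in \mathrm{dom}\,\psi} M_A(\bar x, y)$, and $M_A(\bar x) = M_A(\bar x, T_A(\bar x))$. *)

theory Defs
  imports "HOL-Analysis.Analysis"
begin

text \<open>An arbitrary norm on the finite-dimensional real space 'a (not necessarily the
Euclidean one).  The dual space is identified with 'a via the inner product.\<close>
definition is_norm :: "('a::euclidean_space \<Rightarrow> real) \<Rightarrow> bool" where
  "is_norm N \<longleftrightarrow> (\<forall>x. 0 \<le> N x) \<and> (\<forall>x. N x = 0 \<longleftrightarrow> x = 0)
     \<and> (\<forall>c x. N (c *\<^sub>R x) = \<bar>c\<bar> * N x) \<and> (\<forall>x y. N (x + y) \<le> N x + N y)"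

definition dual_norm :: "('a::euclidean_space \<Rightarrow> real) \<Rightarrow> 'a \<Rightarrow> real" where
  "dual_norm N g = Sup {g \<bullet> x | x. N x \<le> 1}"

text \<open>Closed convex function \<open>\<psi>\<close> with effective domain D (value +\<infinity> outside D):
  D convex, \<open>\<psi>\<close> convex on D, epigraph closed.\<close>
definition closed_convex_fun :: "'a::euclidean_space set \<Rightarrow> ('a \<Rightarrow> real) \<Rightarrow> bool" where
  "closed_convex_fun D \<psi> \<longleftrightarrow> convex D \<and> convex_on D \<psi>
     \<and> closed {(x, t). x \<in> D \<and> \<psi> x \<le> t}"

definition subdiff :: "'a::euclidean_space set \<Rightarrow> ('a \<Rightarrow> real) \<Rightarrow> 'a \<Rightarrow> 'a set" where
  "subdiff D \<psi> x = {g. \<forall>y\<in>D. \<psi> y \<ge> \<psi> x + g \<bullet> (y - x)}"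

definition bregman :: "('a::euclidean_space \<Rightarrow> real) \<Rightarrow> ('a \<Rightarrow> 'a) \<Rightarrow> 'a \<Rightarrow> 'a \<Rightarrow> real" where
  "bregman d gd x y = d y - d x - gd x \<bullet> (y - x)"

definition model ::
  "('a::euclidean_space \<Rightarrow> real) \<Rightarrow> ('a \<Rightarrow> 'a) \<Rightarrow> ('a \<Rightarrow> 'a \<Rightarrow>\<^sub>L 'a) \<Rightarrow> ('a \<Rightarrow> real)
    \<Rightarrow> ('a \<Rightarrow> 'a) \<Rightarrow> ('a \<Rightarrow> real) \<Rightarrow> real \<Rightarrow> 'a \<Rightarrow> 'a \<Rightarrow> real" where
  "model f gf H d gd \<psi> A xb y =
     f xb + gf xb \<bullet> (y - xb) + (1/2) * ((H xb) (y - xb) \<bullet> (y - xb))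
     + A * bregman d gd xb y + \<psi> y"

end

theory Submission
  imports Defs
begin
lemma dir_deriv:
  fixes \<phi> :: "'a::real_normed_vector \<Rightarrow> real"
  assumes "(\<phi> has_derivative \<phi>') (at x)"
  shows "((\<lambda>t. (\<phi> (x + t *\<^sub>R v) - \<phi> x) / t) \<longlongrightarrow> \<phi>' v) (at_right 0)"
proof -
  have lin: "linear \<phi>'" using assms has_derivative_linear by blast
  have "((\<lambda>t. x + t *\<^sub>R v) has_derivative (\<lambda>t. t *\<^sub>R v)) (at 0)"
    by (auto intro!: derivative_eq_intros)
  moreover have "(\<phi> has_derivative \<phi>') (at (x + 0 *\<^sub>R v))" using assms by simp
  ultimately have "((\<lambda>t. \<phi> (x + t *\<^sub>R v)) has_derivative (\<lambda>t. \<phi>' (t *\<^sub>R v))) (at 0)"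
    by (rule has_derivative_compose)
  moreover have "(\<lambda>t. \<phi>' (t *\<^sub>R v)) = (*) (\<phi>' v)"
    using linear_scale[OF lin] by (auto simp: fun_eq_iff)
  ultimately have "((\<lambda>t. \<phi> (x + t *\<^sub>R v)) has_field_derivative \<phi>' v) (at 0)"
    by (simp add: has_field_derivative_def)
  then have "((\<lambda>h. (\<phi> (x + (0+h) *\<^sub>R v) - \<phi> (x + 0 *\<^sub>R v)) / h) \<longlongrightarrow> \<phi>' v) (at 0)"
    by (simp only: DERIV_def)
  then have "((\<lambda>h. (\<phi> (x + h *\<^sub>R v) - \<phi> x) / h) \<longlongrightarrow> \<phi>' v) (at 0)" by simp
  then show ?thesis by (rule tendsto_mono[OF at_le, rotated]) simp
qed

lemma nonneg_limit:
  fixes q :: "real \<Rightarrow> real"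
  assumes "(q \<longlongrightarrow> L) (at_right 0)" "\<And>t. 0 < t \<Longrightarrow> t < 1 \<Longrightarrow> 0 \<le> q t"
  shows "0 \<le> L"
proof (rule tendsto_lowerbound[OF assms(1)])
  show "\<forall>\<^sub>F t in at_right 0. 0 \<le> q t"
    using eventually_at_right_real[of 0 1] by (rule eventually_mono) (auto intro: assms(2))
qed (simp add: trivial_limit_at_right_real)

lemma norm_lower:
  fixes N :: "'a::euclidean_space \<Rightarrow> real"
  assumes N: "is_norm N"
  shows "\<exists>c>0. \<forall>x. c * norm x \<le> N x"
proof -
  have hom: "N (c *\<^sub>R x) = \<bar>c\<bar> * N x" and tri: "N (x + y) \<le> N x + N y"
    and pos: "N x = 0 \<longleftrightarrow> x = 0" and nn: "0 \<le> N x" for c x y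
    using N unfolding is_norm_def by auto
  have cv: "convex_on UNIV N"
  proof (rule convex_onI)
    fix t :: real and x y :: 'a assume t: "0 < t" "t < 1"
    have "N ((1 - t) *\<^sub>R x + t *\<^sub>R y) \<le> N ((1 - t) *\<^sub>R x) + N (t *\<^sub>R y)" by (rule tri)
    also have "\<dots> = (1 - t) * N x + t * N y" using t by (simp add: hom)
    finally show "N ((1 - t) *\<^sub>R x + t *\<^sub>R y) \<le> (1 - t) * N x + t * N y" .
  qed simp
  then have "continuous_on UNIV N" by (intro convex_on_continuous) auto
  then have cs: "continuous_on (sphere 0 1) N" by (rule continuous_on_subset) auto
  obtain b :: 'a where b: "b \<in> Basis" using nonempty_Basis by blast
  then have "b \<in> sphere 0 1" by simp
  then obtain x0 where x0: "x0 \<in> sphere (0::'a) 1" "\<And>y. y \<in> sphere 0 1 \<Longrightarrow> N x0 \<le> N y"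
    using continuous_attains_inf[OF compact_sphere _ cs] by blast
  have "x0 \<noteq> 0" using x0(1) by auto
  then have c0: "N x0 > 0" using pos[of x0] nn[of x0] by linarith
  have "N x0 * norm x \<le> N x" for x
  proof (cases "x = 0")
    case True then show ?thesis using nn[of x] by simp
  next
    case False
    then have "(1 / norm x) *\<^sub>R x \<in> sphere 0 1" by simp
    then have "N x0 \<le> N ((1 / norm x) *\<^sub>R x)" by (rule x0(2))
    also have "\<dots> = N x / norm x" by (simp add: hom)
    finally show ?thesis using False by (simp add: field_simps)
  qed
  then show ?thesis using c0 by blast
qed

lemma dual_bound:
  fixes N :: "'a::euclidean_space \<Rightarrow> real"
  assumes N: "is_norm N"
  shows "G \<bullet> x \<le> dual_norm N G * N x"
proof -
  have hom: "N (c *\<^sub>R x) = \<bar>c\<bar> * N x" and pos: "N x = 0 \<longleftrightarrow> x = 0" and nn: "0 \<le> N x" for c x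
    using N unfolding is_norm_def by auto
  obtain c where c: "c > 0" "\<And>x. c * norm x \<le> N x" using norm_lower[OF N] by blast
  have bdd: "bdd_above {G \<bullet> x | x. N x \<le> 1}"
  proof (rule bdd_aboveI)
    fix r assume "r \<in> {G \<bullet> x | x. N x \<le> 1}"
    then obtain y where y: "r = G \<bullet> y" "N y \<le> 1" by blast
    have "c * norm y \<le> 1" using c(2)[of y] y(2) by linarith
    then have ny: "norm y \<le> 1 / c" using c(1) by (simp add: field_simps mult.commute)
    have "r \<le> norm G * norm y" using y(1) Cauchy_Schwarz_ineq2[of G y] by simp
    also have "\<dots> \<le> norm G * (1 / c)" by (rule mult_left_mono[OF ny]) simp
    finally show "r \<le> norm G * (1 / c)" .
  qed
  have up: "G \<bullet> y \<le> dual_norm N G" if "N y \<le> 1" for y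
    unfolding dual_norm_def by (rule cSup_upper[OF _ bdd]) (use that in blast)
  show ?thesis
  proof (cases "x = 0")
    case True
    have "0 \<le> dual_norm N G" using up[of 0] pos[of 0] by simp
    then show ?thesis using True nn[of x] by simp
  next
    case False
    then have Np: "N x > 0" using pos[of x] nn[of x] by linarith
    have "N ((1 / N x) *\<^sub>R x) \<le> 1" using Np by (simp add: hom)
    then have "G \<bullet> ((1 / N x) *\<^sub>R x) \<le> dual_norm N G" by (rule up)
    then show ?thesis using Np by (simp add: field_simps)
  qed
qed

lemma tangent_ineq:
  fixes f :: "'a::euclidean_space \<Rightarrow> real"
  assumes cv: "convex_on UNIV f" and gr: "(f has_derivative (\<lambda>h. g \<bullet> h)) (at x)"
  shows "f y - f x \<ge> g \<bullet> (y - x)"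
proof -
  let ?v = "y - x"
  have lim: "((\<lambda>t. (f y - f x) - (f (x + t *\<^sub>R ?v) - f x) / t) \<longlongrightarrow> (f y - f x) - g \<bullet> ?v) (at_right 0)"
    by (intro tendsto_intros dir_deriv[OF gr])
  have "0 \<le> (f y - f x) - g \<bullet> ?v"
  proof (rule nonneg_limit[OF lim])
    fix t :: real assume t: "0 < t" "t < 1"
    have "x + t *\<^sub>R ?v = (1 - t) *\<^sub>R x + t *\<^sub>R y" by (simp add: algebra_simps)
    then have "f (x + t *\<^sub>R ?v) \<le> (1 - t) * f x + t * f y"
      using convex_onD[OF cv, of t x y] t by simp
    then have "f (x + t *\<^sub>R ?v) - f x \<le> (f y - f x) * t" by (simp add: algebra_simps)
    then have "(f (x + t *\<^sub>R ?v) - f x) / t \<le> f y - f x" using t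
      by (simp add: divide_le_eq)
    then show "0 \<le> (f y - f x) - (f (x + t *\<^sub>R ?v) - f x) / t" by simp
  qed
  then show ?thesis by simp
qed

lemma hess_psd:
  fixes f :: "'a::euclidean_space \<Rightarrow> real"
  assumes cv: "convex_on UNIV f" and gr: "\<And>x. (f has_derivative (\<lambda>h. gf x \<bullet> h)) (at x)"
    and hs: "\<And>x. (gf has_derivative (\<lambda>h. H x h)) (at x)"
  shows "0 \<le> H x h \<bullet> h"
proof -
  have mono: "0 \<le> (gf y - gf z) \<bullet> (y - z)" for y z
  proof -
    have "f y - f z \<ge> gf z \<bullet> (y - z)" by (rule tangent_ineq[OF cv gr])
    moreover have "f z - f y \<ge> gf y \<bullet> (z - y)" by (rule tangent_ineq[OF cv gr])
    ultimately show ?thesis by (simp add: inner_diff_left inner_diff_right)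
  qed
  have d: "((\<lambda>z. gf z \<bullet> h) has_derivative (\<lambda>k. H x k \<bullet> h)) (at x)"
    by (rule has_derivative_inner_left[OF hs])
  have lim: "((\<lambda>t. (gf (x + t *\<^sub>R h) \<bullet> h - gf x \<bullet> h) / t) \<longlongrightarrow> H x h \<bullet> h) (at_right 0)"
    by (rule dir_deriv[OF d])
  show ?thesis
  proof (rule nonneg_limit[OF lim])
    fix t :: real assume t: "0 < t" "t < 1"
    have "0 \<le> (gf (x + t *\<^sub>R h) - gf x) \<bullet> ((x + t *\<^sub>R h) - x)" by (rule mono)
    then have "0 \<le> t * (gf (x + t *\<^sub>R h) \<bullet> h - gf x \<bullet> h)" by (simp add: inner_diff_left)
    then have "0 \<le> gf (x + t *\<^sub>R h) \<bullet> h - gf x \<bullet> h" using t by (simp add: zero_le_mult_iff)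
    then show "0 \<le> (gf (x + t *\<^sub>R h) \<bullet> h - gf x \<bullet> h) / t" using t by simp
  qed
qed
theorem lemma1:
  fixes N :: "'a::euclidean_space \<Rightarrow> real"
    and f d \<psi> :: "'a \<Rightarrow> real"
    and gf gd :: "'a \<Rightarrow> 'a"
    and H :: "'a \<Rightarrow> 'a \<Rightarrow>\<^sub>L 'a"
    and D :: "'a set"
    and \<sigma> A :: real
    and xb T :: 'a
  assumes N: "is_norm N"
    and psi: "closed_convex_fun D \<psi>"
    and f_convex: "convex_on UNIV f"
    and f_grad: "\<And>x. (f has_derivative (\<lambda>h. gf x \<bullet> h)) (at x)"
    and f_hess: "\<And>x. (gf has_derivative (\<lambda>h. H x h)) (at x)"
    and H_cont: "continuous_on UNIV H"
    and d_grad: "\<And>x. (d has_derivative (\<lambda>h. gd x \<bullet> h)) (at x)"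
    and sigma: "0 < \<sigma>" "\<sigma> \<le> 1"
    and d_strong: "\<And>x y. x \<in> D \<Longrightarrow> y \<in> D \<Longrightarrow>
                     d y \<ge> d x + gd x \<bullet> (y - x) + \<sigma> / 2 * (N (y - x))\<^sup>2"
    and d_lip: "\<And>x y. x \<in> D \<Longrightarrow> y \<in> D \<Longrightarrow> dual_norm N (gd x - gd y) \<le> N (x - y)"
    and xb: "xb \<in> D"
    and A: "A > 0"
    and T_min: "T \<in> D" "\<And>y. y \<in> D \<Longrightarrow> model f gf H d gd \<psi> A xb T \<le> model f gf H d gd \<psi> A xb y"
  shows "(\<forall>y\<in>D. model f gf H d gd \<psi> A xb y \<ge> model f gf H d gd \<psi> A xb T
              + (1/2) * ((H xb) (y - T) \<bullet> (y - T)) + (1/2) * \<sigma> * A * (N (y - T))\<^sup>2)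
         \<and> (\<forall>g\<in>subdiff D \<psi> xb. N (T - xb) \<le> 1 / (\<sigma> * A) * dual_norm N (gf xb + g))"
proof -
  let ?M = "model f gf H d gd \<psi> A xb"
  have Mexp: "?M z = f xb + gf xb \<bullet> (z - xb) + (1/2) * (H xb (z - xb) \<bullet> (z - xb))
      + A * (d z - d xb - gd xb \<bullet> (z - xb)) + \<psi> z" for z
    by (simp add: model_def bregman_def)
  have convD: "convex D" and cvpsi: "convex_on D \<psi>" using psi unfolding closed_convex_fun_def by auto
  have hom: "N (c *\<^sub>R x) = \<bar>c\<bar> * N x" and pos: "N x = 0 \<longleftrightarrow> x = 0" and nn: "0 \<le> N x" for c x
    using N unfolding is_norm_def by auto
  have quad: "H xb (a + t *\<^sub>R v) \<bullet> (a + t *\<^sub>R v) = H xb a \<bullet> a + t * (H xb a \<bullet> v + H xb v \<bullet> a) + t\<^sup>2 * (H xb v \<bullet> v)" for a v t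
    by (simp add: blinfun.add_right blinfun.scaleR_right inner_add_left inner_add_right algebra_simps power2_eq_square)
  have FOC: "0 \<le> gf xb \<bullet> (y - T) + (1/2) * (H xb (T - xb) \<bullet> (y - T) + H xb (y - T) \<bullet> (T - xb))
      + A * (gd T \<bullet> (y - T) - gd xb \<bullet> (y - T)) + \<psi> y - \<psi> T" if y: "y \<in> D" for y
  proof -
    define v where "v = y - T"
    define a where "a = T - xb"
    define c where "c = H xb v \<bullet> v"
    define K0 where "K0 = gf xb \<bullet> v + (1/2) * (H xb a \<bullet> v + H xb v \<bullet> a) - A * (gd xb \<bullet> v) + \<psi> y - \<psi> T"
    define q where "q t = K0 + t / 2 * c + A * ((d (T + t *\<^sub>R v) - d T) / t)" for t
    have lim: "(q \<longlongrightarrow> K0 + 0 / 2 * c + A * (gd T \<bullet> v)) (at_right 0)"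
      unfolding q_def by (intro tendsto_intros dir_deriv[OF d_grad[of T]] tendsto_ident_at) simp_all
    have "0 \<le> K0 + 0 / 2 * c + A * (gd T \<bullet> v)"
    proof (rule nonneg_limit[OF lim])
      fix t :: real assume t: "0 < t" "t < 1"
      have zeq: "T + t *\<^sub>R v = (1 - t) *\<^sub>R T + t *\<^sub>R y" by (simp add: v_def algebra_simps)
      have zD: "T + t *\<^sub>R v \<in> D" unfolding zeq using t T_min(1) y by (intro convexD[OF convD]) auto
      have pz: "\<psi> (T + t *\<^sub>R v) \<le> (1 - t) * \<psi> T + t * \<psi> y"
        unfolding zeq using t T_min(1) y by (intro convex_onD[OF cvpsi]) auto
      have "?M T \<le> ?M (T + t *\<^sub>R v)" by (rule T_min(2)[OF zD])
      moreover have "?M (T + t *\<^sub>R v) = f xb + gf xb \<bullet> (a + t *\<^sub>R v) + (1/2) * (H xb (a + t *\<^sub>R v) \<bullet> (a + t *\<^sub>R v))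
          + A * (d (T + t *\<^sub>R v) - d xb - gd xb \<bullet> (a + t *\<^sub>R v)) + \<psi> (T + t *\<^sub>R v)"
      proof -
        have "T + t *\<^sub>R v - xb = a + t *\<^sub>R v" by (simp add: a_def algebra_simps)
        then show ?thesis by (simp only: Mexp)
      qed
      moreover have "?M T = f xb + gf xb \<bullet> a + (1/2) * (H xb a \<bullet> a)
          + A * (d T - d xb - gd xb \<bullet> a) + \<psi> T"
        by (simp only: Mexp a_def)
      ultimately have "0 \<le> gf xb \<bullet> (t *\<^sub>R v) + (1/2) * (t * (H xb a \<bullet> v + H xb v \<bullet> a) + t\<^sup>2 * c)
          + A * (d (T + t *\<^sub>R v) - d T - gd xb \<bullet> (t *\<^sub>R v)) + \<psi> (T + t *\<^sub>R v) - \<psi> T"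
        unfolding quad c_def by (simp add: inner_add_right algebra_simps)
      then have "0 \<le> t * K0 + t\<^sup>2 / 2 * c + A * (d (T + t *\<^sub>R v) - d T)"
        using pz unfolding K0_def by (simp add: algebra_simps)
      moreover have "q t = (t * K0 + t\<^sup>2 / 2 * c + A * (d (T + t *\<^sub>R v) - d T)) / t"
        unfolding q_def using t by (simp add: field_simps power2_eq_square)
      ultimately show "0 \<le> q t" using t by simp
    qed
    then show ?thesis unfolding K0_def v_def a_def by (simp add: algebra_simps)
  qed
  have part1: "?M y \<ge> ?M T + (1/2) * ((H xb) (y - T) \<bullet> (y - T)) + (1/2) * \<sigma> * A * (N (y - T))\<^sup>2"
    if y: "y \<in> D" for y
  proof -
    define v where "v = y - T"
    define a where "a = T - xb"
    have yx: "y - xb = a + 1 *\<^sub>R v" by (simp add: a_def v_def)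
    have e: "?M y - ?M T = gf xb \<bullet> v + (1/2) * (H xb a \<bullet> v + H xb v \<bullet> a) + (1/2) * (H xb v \<bullet> v)
        + A * (d y - d T - gd xb \<bullet> v) + \<psi> y - \<psi> T"
      unfolding Mexp yx quad by (simp add: a_def inner_add_right algebra_simps)
    have ds: "d y \<ge> d T + gd T \<bullet> v + \<sigma> / 2 * (N v)\<^sup>2" using d_strong[OF T_min(1) y] by (simp add: v_def)
    have "A * (d y - d T - gd xb \<bullet> v) \<ge> A * (gd T \<bullet> v - gd xb \<bullet> v + \<sigma> / 2 * (N v)\<^sup>2)"
      using ds A by (intro mult_left_mono) auto
    moreover have "0 \<le> gf xb \<bullet> v + (1/2) * (H xb a \<bullet> v + H xb v \<bullet> a)
      + A * (gd T \<bullet> v - gd xb \<bullet> v) + \<psi> y - \<psi> T" using FOC[OF y] by (simp add: a_def v_def)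
    ultimately have "?M y - ?M T \<ge> (1/2) * (H xb v \<bullet> v) + A * (\<sigma> / 2 * (N v)\<^sup>2)"
      unfolding e by (simp add: algebra_simps)
    then show ?thesis by (simp add: v_def algebra_simps)
  qed
  have part2: "N (T - xb) \<le> 1 / (\<sigma> * A) * dual_norm N (gf xb + g)" if g: "g \<in> subdiff D \<psi> xb" for g
  proof -
    define a where "a = T - xb"
    define G where "G = gf xb + g"
    have sg: "\<psi> T \<ge> \<psi> xb + g \<bullet> a" using g T_min(1) unfolding subdiff_def a_def by auto
    have foc: "0 \<le> gf xb \<bullet> (- a) + (1/2) * (H xb a \<bullet> (- a) + H xb (- a) \<bullet> a)
      + A * (gd T \<bullet> (- a) - gd xb \<bullet> (- a)) + \<psi> xb - \<psi> T"
      using FOC[OF xb] by (simp add: a_def)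
    have Hm: "H xb (- a) = - H xb a" by (simp add: blinfun.minus_right)
    have foc2: "0 \<le> - (gf xb \<bullet> a) - H xb a \<bullet> a - A * ((gd T - gd xb) \<bullet> a) + \<psi> xb - \<psi> T"
      using foc unfolding Hm by (simp add: inner_diff_left algebra_simps)
    have Nm: "N (- a) = N a" using hom[of "-1" a] by simp
    have s1: "d xb \<ge> d T + gd T \<bullet> (- a) + \<sigma> / 2 * (N a)\<^sup>2"
      using d_strong[OF T_min(1) xb] Nm by (simp add: a_def)
    have s2: "d T \<ge> d xb + gd xb \<bullet> a + \<sigma> / 2 * (N a)\<^sup>2"
      using d_strong[OF xb T_min(1)] by (simp add: a_def)
    have sc: "(gd T - gd xb) \<bullet> a \<ge> \<sigma> * (N a)\<^sup>2" using s1 s2 by (simp add: inner_diff_left)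
    have psd: "0 \<le> H xb a \<bullet> a" by (rule hess_psd[OF f_convex f_grad f_hess])
    have db: "G \<bullet> (- a) \<le> dual_norm N G * N a" using dual_bound[OF N, of G "- a"] Nm by simp
    have "A * (\<sigma> * (N a)\<^sup>2) \<le> A * ((gd T - gd xb) \<bullet> a)" using sc A by (intro mult_left_mono) auto
    then have key: "\<sigma> * A * (N a)\<^sup>2 \<le> dual_norm N G * N a"
      using foc2 sg psd db unfolding G_def by (simp add: inner_add_left algebra_simps)
    have sA: "\<sigma> * A > 0" using sigma A by simp
    show ?thesis
    proof (cases "N a = 0")
      case True
      obtain b :: 'a where b: "b \<in> Basis" using nonempty_Basis by blast
      then have "b \<noteq> 0" by auto
      then have Nb: "N b > 0" using pos[of b] nn[of b] by linarith
      have "G \<bullet> b \<le> dual_norm N G * N b" by (rule dual_bound[OF N])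
      moreover have "G \<bullet> (- b) \<le> dual_norm N G * N b" using dual_bound[OF N, of G "- b"] hom[of "-1" b] by simp
      ultimately have "0 \<le> dual_norm N G * N b" by simp
      then have "0 \<le> dual_norm N G" using Nb by (simp add: zero_le_mult_iff)
      then show ?thesis using True sA unfolding a_def G_def by simp
    next
      case False
      then have Na: "N a > 0" using nn[of a] by linarith
      have "(\<sigma> * A * N a) * N a \<le> dual_norm N G * N a" using key by (simp add: power2_eq_square algebra_simps)
      then have "\<sigma> * A * N a \<le> dual_norm N G" using Na by simp
      then have "N a \<le> dual_norm N G / (\<sigma> * A)" using sA by (simp add: pos_le_divide_eq mult.commute)
      then show ?thesis unfolding a_def G_def by simp
    qed
  qed
  show ?thesis using part1 part2 by blast
qed

end
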